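(* Let $m\ge 1$, $N=2^m$, let $\mathcal{A}\subseteq[0,N-1]$ with complement $\mathcal{A}^c=[0,N-1]\setminus\mathcal{A}$, and let $\mathbf{P}\in\mathbb{F}_2^{N\times N}$ be upper triangular with all diagonal entries equal to $1$. Then $$\mathcal{C}_{\mathbf{P}\boldsymbol{G}_N}(\mathcal{A})^{\perp}=\mathcal{C}_{(\mathbf{P}^{t})^{-1}\mathbf{Q}_{\pi}\boldsymbol{G}_N\mathbf{Q}_{\pi}}(\mathcal{A}^c).$$
   Context: $[\ell,u]=\{\ell,\dots,u\}$. $\boldsymbol{G}_N=\begin{pmatrix}1&0\\1&1\end{pmatrix}^{\otimes m}$ over $\mathbb{F}_2$, rows and columns indexed by $0,\dots,N-1$. For $\mathbf{B}\in\mathbb{F}_2^{N\times N}$ and $\mathcal{S}\subseteq[0,N-1]$, $\mathcal{C}_{\mathbf{B}}(\mathcal{S})$ is the binary linear code spanned by the rows of $\mathbf{B}$ indexed by $\mathcal{S}$. $\mathbf{Q}_{\pi}$ is the permutation matrix of the permutation of $[0,N-1]$ swapping $i$ and $N-1-i$. $\perp$ denotes the dual code for the standard inner product over $\mathbb{F}_2$. *)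

theory Defs
  imports "Jordan_Normal_Form.Matrix" "HOL-Library.Z2"
begin

definition kron_mat :: "'a::times mat \<Rightarrow> 'a mat \<Rightarrow> 'a mat" where
  "kron_mat A B = mat (dim_row A * dim_row B) (dim_col A * dim_col B)
     (\<lambda>(i,j). A $$ (i div dim_row B, j div dim_col B) * B $$ (i mod dim_row B, j mod dim_col B))"

definition G2 :: "bit mat" where
  "G2 = mat 2 2 (\<lambda>(i,j). if j \<le> i then 1 else 0)"

fun kron_pow :: "bit mat \<Rightarrow> nat \<Rightarrow> bit mat" where
  "kron_pow A 0 = 1\<^sub>m 1"
| "kron_pow A (Suc k) = kron_mat A (kron_pow A k)"

definition G_N :: "nat \<Rightarrow> bit mat" where
  "G_N m = kron_pow G2 m"

definition Q_pi :: "nat \<Rightarrow> bit mat" where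
  "Q_pi N = mat N N (\<lambda>(i,j). if j = N - 1 - i then 1 else 0)"

definition row_code :: "bit mat \<Rightarrow> nat set \<Rightarrow> bit vec set" where
  "row_code B S = {v. \<exists>c :: nat \<Rightarrow> bit.
      v = vec (dim_col B) (\<lambda>j. \<Sum>i\<in>S. c i * B $$ (i, j))}"

definition dual_code :: "nat \<Rightarrow> bit vec set \<Rightarrow> bit vec set" where
  "dual_code n C = {v \<in> carrier_vec n. \<forall>w\<in>C. v \<bullet> w = 0}"

definition mat_inv :: "bit mat \<Rightarrow> bit mat" where
  "mat_inv A = (SOME B. B \<in> carrier_mat (dim_row A) (dim_row A) \<and> inverts_mat A B \<and> inverts_mat B A)"

end

theory Submission
  imports Defs "Jordan_Normal_Form.Determinant"
begin


lemma kron_pow_carrier: "kron_pow G2 k \<in> carrier_mat (2^k) (2^k)"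
  by (induction k) (auto simp: kron_mat_def G2_def)

lemma kron_pow_Suc_entry:
  assumes "i < 2 * 2^k" "j < 2 * 2^k"
  shows "kron_pow G2 (Suc k) $$ (i,j) =
     G2 $$ (i div 2^k, j div 2^k) * kron_pow G2 k $$ (i mod 2^k, j mod 2^k)"
  using assms kron_pow_carrier[of k]
  by (auto simp: kron_mat_def G2_def)

lemma G2_0: "x < 2 \<Longrightarrow> G2 $$ (x, 0) = 1" by (simp add: G2_def)
lemma G2_1: "x < 2 \<Longrightarrow> G2 $$ (x, 1) = (if x = 1 then 1 else 0)" by (auto simp: G2_def)

lemma G2_vals: "G2 $$ (0, Suc 0) = 0" "G2 $$ (Suc 0, Suc 0) = 1" by (simp_all add: G2_def)

lemma sum_split2:
  fixes f :: "nat \<Rightarrow> 'a::comm_monoid_add"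
  shows "(\<Sum>j<2*N. f j) = (\<Sum>j<N. f j) + (\<Sum>j<N. f (N + j))"
proof -
  have "(\<Sum>j<2*N. f j) = (\<Sum>j\<in>{0..<N}. f j) + (\<Sum>j\<in>{N..<2*N}. f j)"
    by (simp add: lessThan_atLeast0 sum.atLeastLessThan_concat)
  also have "(\<Sum>j\<in>{N..<2*N}. f j) = (\<Sum>j\<in>{0..<N}. f (N + j))"
    using sum.shift_bounds_nat_ivl[of f 0 N N] by (simp add: mult_2 add.commute)
  finally show ?thesis by (simp add: lessThan_atLeast0)
qed

lemma key:
  "\<forall>i<2^m. \<forall>k<2^m. (\<Sum>j<2^m. kron_pow G2 m $$ (i,j) * kron_pow G2 m $$ (k, 2^m-1-j))
     = (if i = 2^m - 1 - k then 1 else 0)"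
proof (induction m)
  case 0
  then show ?case by simp
next
  case (Suc m)
  let ?N = "2^m :: nat"
  let ?G = "kron_pow G2 m"
  show ?case
  proof (intro allI impI)
    fix i k :: nat assume i: "i < 2^Suc m" and k: "k < 2^Suc m"
    define i1 where "i1 = i div ?N"
    define i0 where "i0 = i mod ?N"
    define k1 where "k1 = k div ?N"
    define k0 where "k0 = k mod ?N"
    note defs = i1_def i0_def k1_def k0_def
    have Npos: "?N > 0" by simp
    have i2: "i < 2 * ?N" "k < 2 * ?N" using i k by simp_all
    have i1: "i1 < 2" "i0 < ?N" "k1 < 2" "k0 < ?N"
      using i2 by (simp_all add: defs less_mult_imp_div_less)
    have ik: "i = i1 * ?N + i0" "k = k1 * ?N + k0" unfolding defs by (simp_all add: div_mult_mod_eq)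
    define S where "S = (\<Sum>j<?N. ?G $$ (i0,j) * ?G $$ (k0, ?N-1-j))"
    have S: "S = (if i0 = ?N - 1 - k0 then 1 else 0)" using Suc.IH i1 unfolding S_def by blast
    have e1: "kron_pow G2 (Suc m) $$ (i, b) * kron_pow G2 (Suc m) $$ (k, 2^Suc m - 1 - b)
        = G2 $$ (k1, 1) * (?G $$ (i0,b) * ?G $$ (k0, ?N-1-b))" if b: "b < ?N" for b
    proof -
      have x: "2 * ?N - 1 - b = ?N + (?N-1-b)" using b by simp
      have d: "(2 * ?N - 1 - b) div ?N = 1" "(2 * ?N - 1 - b) mod ?N = ?N - 1 - b"
      proof -
        have "(?N + (?N-1-b)) div ?N = 1" "(?N + (?N-1-b)) mod ?N = ?N-1-b" using b
          by (simp_all only: div_add_self1[OF power_not_zero[of "2::nat"]] mod_add_self1, simp_all)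
        then show "(2 * ?N - 1 - b) div ?N = 1" "(2 * ?N - 1 - b) mod ?N = ?N - 1 - b"
          using x by metis+
      qed
      have "2 * ?N - 1 - b < 2 * ?N" "b < 2 * ?N" using b by simp_all
      then have A: "kron_pow G2 (Suc m) $$ (i,b) = G2 $$ (i1, 0) * ?G $$ (i0, b)"
        and B: "kron_pow G2 (Suc m) $$ (k, 2^Suc m - 1 - b) = G2 $$ (k1, 1) * ?G $$ (k0, ?N - 1 - b)"
        using kron_pow_Suc_entry[OF i2(1), of b] kron_pow_Suc_entry[OF i2(2), of "2 * ?N - 1 - b"] b
        unfolding defs d by (simp_all del: kron_pow.simps)
      show ?thesis unfolding A B using G2_0[OF i1(1)] by (simp only: mult_ac mult_1)

    qed
    have e2: "kron_pow G2 (Suc m) $$ (i, ?N + b) * kron_pow G2 (Suc m) $$ (k, 2^Suc m - 1 - (?N + b))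
        = G2 $$ (i1, 1) * (?G $$ (i0,b) * ?G $$ (k0, ?N-1-b))" if b: "b < ?N" for b
    proof -
      have x: "2 * ?N - 1 - (?N + b) = ?N-1-b" using b by simp
      have "?N + b < 2 * ?N" "?N - 1 - b < 2 * ?N" using b by simp_all
      then have A: "kron_pow G2 (Suc m) $$ (i,?N + b) = G2 $$ (i1, 1) * ?G $$ (i0, b)"
        and B: "kron_pow G2 (Suc m) $$ (k, 2^Suc m - 1 - (?N + b)) = G2 $$ (k1, 0) * ?G $$ (k0, ?N - 1 - b)"
        using kron_pow_Suc_entry[OF i2(1), of "?N + b"] kron_pow_Suc_entry[OF i2(2), of "?N - 1 - b"] b
        unfolding defs x by (simp_all del: kron_pow.simps)
      show ?thesis unfolding A B using G2_0[OF i1(3)] by (simp only: mult_ac mult_1)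

    qed
    have "(\<Sum>j<2^Suc m. kron_pow G2 (Suc m) $$ (i,j) * kron_pow G2 (Suc m) $$ (k, 2^Suc m-1-j))
       = G2 $$ (k1, 1) * S + G2 $$ (i1, 1) * S"
    proof -
      have sp: "(\<Sum>j<2^Suc m. f j) = (\<Sum>j<?N. f j) + (\<Sum>j<?N. f (?N + j))" for f :: "nat \<Rightarrow> bit"
        using sum_split2[of f "?N"] by simp
      show ?thesis unfolding sp S_def sum_distrib_left
        by (intro arg_cong2[where f="(+)"] sum.cong refl) (simp_all only: e1 e2 lessThan_iff)
    qed
    also have "\<dots> = (if i = 2^Suc m - 1 - k then 1 else 0)"
    proof -
      have c: "i1 = 0 \<or> i1 = 1" "k1 = 0 \<or> k1 = 1" using i1 by auto
      show ?thesis unfolding S using c i1(2,4) ik by (auto simp: G2_1 G2_vals)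
    qed
    finally show "(\<Sum>j<2^Suc m. kron_pow G2 (Suc m) $$ (i,j) * kron_pow G2 (Suc m) $$ (k, 2^Suc m-1-j))
     = (if i = 2^Suc m - 1 - k then 1 else 0)" .
  qed
qed


lemma dual_generic:
  fixes X Y :: "'a::field mat"
  assumes X: "X \<in> carrier_mat N N" and Y: "Y \<in> carrier_mat N N"
    and XY: "X * transpose_mat Y = 1\<^sub>m N" and A: "A \<subseteq> {0..<N}"
  shows "{v \<in> carrier_vec N. \<forall>w \<in> {w. \<exists>d. w = vec N (\<lambda>l. \<Sum>i\<in>A. d i * X $$ (i,l))}. v \<bullet> w = 0}
       = {v. \<exists>c. v = vec N (\<lambda>l. \<Sum>j\<in>{0..<N} - A. c j * Y $$ (j,l))}"
    (is "?L = ?R")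
proof -
  let ?Ac = "{0..<N} - A"
  have o1: "(\<Sum>l\<in>{0..<N}. X $$ (i,l) * Y $$ (j,l)) = (if i = j then 1 else 0)"
    if "i < N" "j < N" for i j
  proof -
    have "(X * transpose_mat Y) $$ (i,j) = (\<Sum>l\<in>{0..<N}. X $$ (i,l) * Y $$ (j,l))"
      using X Y that by (simp add: scalar_prod_def)
    then show ?thesis using XY that by simp
  qed
  have YX: "transpose_mat Y * X = 1\<^sub>m N"
    by (rule mat_mult_left_right_inverse[OF X _ XY]) (use Y in simp)
  have o2: "(\<Sum>j\<in>{0..<N}. Y $$ (j,k) * X $$ (j,l)) = (if k = l then 1 else 0)"
    if "k < N" "l < N" for k l
  proof -
    have "(transpose_mat Y * X) $$ (k,l) = (\<Sum>j\<in>{0..<N}. Y $$ (j,k) * X $$ (j,l))"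
      using X Y that by (simp add: scalar_prod_def)
    then show ?thesis using YX that by simp
  qed
  have finA: "finite A" using A finite_subset by blast
  show ?thesis
  proof (intro equalityI subsetI)
    fix v assume "v \<in> ?R"
    then obtain c where v: "v = vec N (\<lambda>l. \<Sum>j\<in>?Ac. c j * Y $$ (j,l))" by blast
    show "v \<in> ?L"
    proof (safe)
      show "v \<in> carrier_vec N" using v by simp
      fix d
      have "v \<bullet> vec N (\<lambda>l. \<Sum>i\<in>A. d i * X $$ (i,l))
          = (\<Sum>l\<in>{0..<N}. (\<Sum>j\<in>?Ac. c j * Y $$ (j,l)) * (\<Sum>i\<in>A. d i * X $$ (i,l)))"
        using v by (simp add: scalar_prod_def)
      also have "\<dots> = (\<Sum>l\<in>{0..<N}. \<Sum>j\<in>?Ac. \<Sum>i\<in>A. c j * d i * (X $$ (i,l) * Y $$ (j,l)))"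
        by (simp add: sum_product mult_ac) (rule sum.cong[OF refl], rule sum.swap)
      also have "\<dots> = (\<Sum>j\<in>?Ac. \<Sum>i\<in>A. c j * d i * (\<Sum>l\<in>{0..<N}. X $$ (i,l) * Y $$ (j,l)))"
        unfolding sum_distrib_left
        by (subst sum.swap, rule sum.cong[OF refl], subst sum.swap, simp add: mult_ac)
      also have "\<dots> = 0"
      proof (intro sum.neutral ballI)
        fix j i assume j: "j \<in> ?Ac" and i: "i \<in> A"
        then have "i < N" "j < N" "i \<noteq> j" using A by auto
        then show "c j * d i * (\<Sum>l\<in>{0..<N}. X $$ (i,l) * Y $$ (j,l)) = 0" using o1 by simp
      qed
      finally show "v \<bullet> vec N (\<lambda>l. \<Sum>i\<in>A. d i * X $$ (i,l)) = 0" .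
    qed
  next
    fix v assume vL: "v \<in> ?L"
    then have vc: "v \<in> carrier_vec N" by simp
    have z: "(\<Sum>l\<in>{0..<N}. v $ l * X $$ (i,l)) = 0" if i: "i \<in> A" for i
    proof -
      have eq: "vec N (\<lambda>l. \<Sum>i'\<in>A. (if i' = i then 1 else 0) * X $$ (i',l)) = vec N (\<lambda>l. X $$ (i,l))"
        using i finA by (simp add: if_distrib[of "\<lambda>x. x * _"] sum.delta cong: if_cong)
      have "vec N (\<lambda>l. X $$ (i,l)) \<in> {w. \<exists>d. w = vec N (\<lambda>l. \<Sum>i\<in>A. d i * X $$ (i,l))}"
        by (rule CollectI, rule exI[of _ "\<lambda>i'. if i' = i then 1 else 0"], rule eq[symmetric])
      then have "v \<bullet> vec N (\<lambda>l. X $$ (i,l)) = 0" using vL by blast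
      then show ?thesis using vc by (simp add: scalar_prod_def)
    qed
    define c where "c j = (\<Sum>l\<in>{0..<N}. v $ l * X $$ (j,l))" for j
    have "v = vec N (\<lambda>k. \<Sum>j\<in>?Ac. c j * Y $$ (j,k))"
    proof (rule eq_vecI)
      fix k assume "k < dim_vec (vec N (\<lambda>k. \<Sum>j\<in>?Ac. c j * Y $$ (j,k)))"
      then have k: "k < N" by simp
      have "(\<Sum>j\<in>?Ac. c j * Y $$ (j,k)) = (\<Sum>j\<in>{0..<N}. c j * Y $$ (j,k))"
        using A z by (intro sum.mono_neutral_left) (auto simp: c_def)
      also have "\<dots> = (\<Sum>l\<in>{0..<N}. v $ l * (\<Sum>j\<in>{0..<N}. Y $$ (j,k) * X $$ (j,l)))"
        unfolding c_def sum_distrib_right sum_distrib_left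
        by (subst sum.swap) (simp add: mult_ac)
      also have "\<dots> = (\<Sum>l\<in>{0..<N}. v $ l * (if k = l then 1 else 0))"
        using o2 k by (intro sum.cong) auto
      also have "\<dots> = v $ k" using k by (simp add: if_distrib[of "\<lambda>x. _ * x"] sum.delta cong: if_cong)
      finally show "v $ k = vec N (\<lambda>k. \<Sum>j\<in>?Ac. c j * Y $$ (j,k)) $ k" using k by simp
    qed (use vc in simp)
    then show "v \<in> ?R" by blast
  qed
qed

declare add_bit_eq_xor[simp del] mult_bit_eq_and[simp del]

lemma Q_carrier: "Q_pi N \<in> carrier_mat N N" by (simp add: Q_pi_def)

lemma G_carrier: "G_N m \<in> carrier_mat (2^m) (2^m)" unfolding G_N_def by (rule kron_pow_carrier)

lemma GQ_entry:
  assumes "i < 2^m" "j < 2^m"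
  shows "(G_N m * Q_pi (2^m)) $$ (i,j) = G_N m $$ (i, 2^m - 1 - j)"
proof -
  let ?N = "2^m :: nat"
  have "(G_N m * Q_pi ?N) $$ (i,j) = (\<Sum>l\<in>{0..<?N}. G_N m $$ (i,l) * (if j = ?N - 1 - l then 1 else 0))"
    using assms G_carrier[of m] by (simp add: scalar_prod_def Q_pi_def)
  also have "\<dots> = (\<Sum>l\<in>{0..<?N}. if l = ?N - 1 - j then G_N m $$ (i,l) else 0)"
    using assms by (intro sum.cong refl) auto
  also have "\<dots> = G_N m $$ (i, ?N - 1 - j)" using assms by (simp add: sum.delta)
  finally show ?thesis .
qed

lemma GQGt: "G_N m * Q_pi (2^m) * transpose_mat (G_N m) = Q_pi (2^m)"
proof (rule eq_matI)
  let ?N = "2^m :: nat"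
  fix i k assume ik: "i < dim_row (Q_pi ?N)" "k < dim_col (Q_pi ?N)"
  then have i: "i < ?N" and k: "k < ?N" by (simp_all add: Q_pi_def)
  have "(G_N m * Q_pi ?N * transpose_mat (G_N m)) $$ (i,k)
     = (\<Sum>j\<in>{0..<?N}. (G_N m * Q_pi ?N) $$ (i,j) * G_N m $$ (k,j))"
    using i k G_carrier[of m] Q_carrier[of ?N] by (simp add: scalar_prod_def del: assoc_mult_mat)
  also have "\<dots> = (\<Sum>j<?N. G_N m $$ (k,j) * G_N m $$ (i, ?N - 1 - j))"
    using i by (simp add: GQ_entry lessThan_atLeast0 mult.commute)
  also have "\<dots> = (if k = ?N - 1 - i then 1 else 0)"
    using key[of m] i k unfolding G_N_def by blast
  also have "\<dots> = Q_pi ?N $$ (i,k)" using i k by (auto simp: Q_pi_def)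
  finally show "(G_N m * Q_pi ?N * transpose_mat (G_N m)) $$ (i,k) = Q_pi ?N $$ (i,k)" .
qed (use G_carrier[of m] Q_carrier[of "2^m"] in auto)

lemma QQ: "Q_pi N * Q_pi N = 1\<^sub>m N"
proof (rule eq_matI)
  fix i j assume "i < dim_row (1\<^sub>m N)" "j < dim_col (1\<^sub>m N)"
  then have i: "i < N" and j: "j < N" by simp_all
  have "(Q_pi N * Q_pi N) $$ (i,j) = (\<Sum>l\<in>{0..<N}. (if l = N - 1 - i then 1 else 0) * (if j = N - 1 - l then 1 else 0))"
    using i j by (simp add: scalar_prod_def Q_pi_def)
  also have "\<dots> = (\<Sum>l\<in>{0..<N}. if l = N - 1 - i then (if j = N - 1 - l then 1 else 0) else 0)"
    by (intro sum.cong refl) auto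
  also have "\<dots> = (if j = i then 1 else 0)" using i j by (simp add: sum.delta)
  finally show "(Q_pi N * Q_pi N) $$ (i,j) = 1\<^sub>m N $$ (i,j)" using i j by simp
qed (auto simp: Q_pi_def)

lemma QT: "transpose_mat (Q_pi N) = Q_pi N"
  by (rule eq_matI) (auto simp: Q_pi_def)



theorem corollary2:
  fixes m :: nat and A :: "nat set" and P :: "bit mat"
  assumes "m \<ge> 1"
    and "A \<subseteq> {0..<2^m}"
    and "P \<in> carrier_mat (2^m) (2^m)"
    and "upper_triangular P"
    and "\<forall>i < 2^m. P $$ (i, i) = 1"
  shows "dual_code (2^m) (row_code (P * G_N m) A) =
         row_code (mat_inv (transpose_mat P) * Q_pi (2^m) * G_N m * Q_pi (2^m)) ({0..<2^m} - A)"
proof -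
  let ?N = "2^m :: nat"
  let ?G = "G_N m" and ?Q = "Q_pi ?N"
  have P: "P \<in> carrier_mat ?N ?N" by fact
  have Pt: "transpose_mat P \<in> carrier_mat ?N ?N" using P by simp
  have G: "?G \<in> carrier_mat ?N ?N" by (rule G_carrier)
  have Q: "?Q \<in> carrier_mat ?N ?N" by (rule Q_carrier)
  have "diag_mat P = map (\<lambda>i. 1) [0..<?N]"
    using P assms(5) by (auto simp: diag_mat_def)
  moreover have "prod_list (map (\<lambda>i. 1::bit) xs) = 1" for xs :: "nat list"
    by (induct xs) auto
  ultimately have "prod_list (diag_mat P) = 1" by simp
  then have "det (transpose_mat P) = 1"
    using det_upper_triangular[OF assms(4) P] det_transpose[OF P] by simp
  then have "transpose_mat P \<in> Units (ring_mat TYPE(bit) ?N undefined)"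
    using det_non_zero_imp_unit[OF Pt] by simp
  then obtain B where B: "B \<in> carrier_mat ?N ?N" "B * transpose_mat P = 1\<^sub>m ?N" "transpose_mat P * B = 1\<^sub>m ?N"
    unfolding Units_def by (auto simp: ring_mat_simps)
  define Bi where "Bi = mat_inv (transpose_mat P)"
  have ex: "B \<in> carrier_mat (dim_row (transpose_mat P)) (dim_row (transpose_mat P)) \<and>
      inverts_mat (transpose_mat P) B \<and> inverts_mat B (transpose_mat P)"
    using B P by (auto simp: inverts_mat_def)
  have "Bi \<in> carrier_mat (dim_row (transpose_mat P)) (dim_row (transpose_mat P)) \<and>
      inverts_mat (transpose_mat P) Bi \<and> inverts_mat Bi (transpose_mat P)"
    unfolding Bi_def mat_inv_def by (rule someI, rule ex)
  then have Bi: "Bi \<in> carrier_mat ?N ?N" "Bi * transpose_mat P = 1\<^sub>m ?N"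
    using P by (auto simp: inverts_mat_def)
  define X where "X = P * ?G"
  define Y where "Y = Bi * ?Q * ?G * ?Q"
  have X: "X \<in> carrier_mat ?N ?N" using P G by (simp add: X_def)
  have Y: "Y \<in> carrier_mat ?N ?N" using Bi G Q unfolding Y_def by (metis mult_carrier_mat)
  have Gt: "transpose_mat ?G \<in> carrier_mat ?N ?N" and Bit: "transpose_mat Bi \<in> carrier_mat ?N ?N"
    using G Bi by auto
  have BQ: "Bi * ?Q \<in> carrier_mat ?N ?N" using Bi Q by (metis mult_carrier_mat)
  have BQG: "Bi * ?Q * ?G \<in> carrier_mat ?N ?N" using BQ G by (metis mult_carrier_mat)
  have Yt: "transpose_mat Y = ?Q * (transpose_mat ?G * (?Q * transpose_mat Bi))"
    unfolding Y_def transpose_mult[OF BQG Q] transpose_mult[OF BQ G] transpose_mult[OF Bi(1) Q] QT ..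
  have "X * transpose_mat Y = P * ((?G * ?Q * transpose_mat ?G) * ?Q) * transpose_mat Bi"
    unfolding Yt X_def using P G Q Bi(1) Gt Bit
    by (simp add: mult_carrier_mat assoc_mult_mat[where n\<^sub>1 = ?N and n\<^sub>2 = ?N and n\<^sub>3 = ?N and n\<^sub>4 = ?N])
  also have "\<dots> = P * transpose_mat Bi" 
    unfolding GQGt QQ using P Bi by simp
  also have "\<dots> = transpose_mat (Bi * transpose_mat P)"
    using transpose_mult[OF Bi(1) Pt] by simp
  also have "\<dots> = 1\<^sub>m ?N" using Bi by simp
  finally have XY: "X * transpose_mat Y = 1\<^sub>m ?N" .
  have dX: "dim_col X = ?N" and dY: "dim_col Y = ?N" using X Y by auto
  show ?thesis
    unfolding dual_code_def row_code_def X_def[symmetric] Bi_def[symmetric] Y_def[symmetric] dX dY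
    by (rule dual_generic[OF X Y XY assms(2)])
qed

end
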